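(* Let $B$ be a Ferrers board with $n$ columns, padded with columns of height zero on the left so that its root vector $\xi(B)=\langle z_1,\ldots,z_n\rangle$ has only non-negative entries. For each integer $k$ let $v_k$ be the number of entries of $\xi(B)$ equal to $k$, and let $M$ be the greatest integer with $v_M\neq 0$. If, for every $0\le i<M-1$, $v_i>1$ implies $v_{i+1}>1$, then $B$ is connected by a sequence of edges in the rook equivalence graph $G(B)$ to a Ferrers board $B'$ whose root vector has the form $\xi(B')=\langle 0,1,\ldots,M-1,M,\ldots,z_n\rangle$, i.e. the first $M+1$ entries of $\xi(B')$ are $0,1,\ldots,M$ in increasing order.
   Context: A Ferrers board is given by a weakly increasing sequence of non-negative integers $B=(b_1,\ldots,b_n)$ of column heights; it is the set of unit cells in the first quadrant lying in column $i$ and rows $1,\ldots,b_i$. Prepending columns of height $0$ on the left does not change the board, and boards are compared using the same number of columns by such padding. A placement of $k$ rooks on $B$ is a set of $k$ cells of $B$ no two in the same row or column; $r_k(B)$ is the number of such placements. Two boards are rook equivalent if they have equal $r_k$ for all $k\ge 0$. The root vector of $B$ is $\xi(B)=\langle 0-b_1,1-b_2,\ldots,(n-1)-b_n\rangle$. The rook equivalence graph $G(B)$ has as vertices all Ferrers boards rook equivalent to $B$, and $\{B_1,B_2\}$ is an edge iff, written with the same number of columns, $B_1$ and $B_2$ differ in exactly two columns $i$ and $j$, where $B_1$ has $k$ more cells than $B_2$ in column $i$ and $k$ fewer cells than $B_2$ in column $j$, for some $k>0$. *)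

theory Defs
  imports Main
begin

text \<open>A Ferrers board is a list of column heights (0-indexed columns), weakly increasing.\<close>
definition ferrers :: "nat list \<Rightarrow> bool" where
  "ferrers B \<longleftrightarrow> sorted B"

definition cells :: "nat list \<Rightarrow> (nat \<times> nat) set" where
  "cells B = {(i, r). i < length B \<and> 1 \<le> r \<and> r \<le> B ! i}"

definition rook_num :: "nat \<Rightarrow> nat list \<Rightarrow> nat" where
  "rook_num k B = card {S. S \<subseteq> cells B \<and> card S = k \<and> inj_on fst S \<and> inj_on snd S}"

definition rook_equiv :: "nat list \<Rightarrow> nat list \<Rightarrow> bool" where
  "rook_equiv B1 B2 \<longleftrightarrow> (\<forall>k. rook_num k B1 = rook_num k B2)"

definition root_vec :: "nat list \<Rightarrow> int list" where
  "root_vec B = map (\<lambda>i. int i - int (B ! i)) [0..<length B]"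

definition board_edge :: "nat list \<Rightarrow> nat list \<Rightarrow> bool" where
  "board_edge B1 B2 \<longleftrightarrow>
     (\<exists>p1 p2. let C1 = replicate p1 0 @ B1; C2 = replicate p2 0 @ B2 in
        length C1 = length C2 \<and>
        (\<exists>i j k. i < length C1 \<and> j < length C1 \<and> i \<noteq> j \<and> 0 < k \<and>
           C1 ! i = C2 ! i + k \<and> C1 ! j + k = C2 ! j \<and>
           (\<forall>l < length C1. l \<noteq> i \<and> l \<noteq> j \<longrightarrow> C1 ! l = C2 ! l)))"

definition G_edge :: "nat list \<Rightarrow> nat list \<Rightarrow> nat list \<Rightarrow> bool" where
  "G_edge B X Y \<longleftrightarrow> ferrers X \<and> ferrers Y \<and> rook_equiv X B \<and> rook_equiv Y B \<and> board_edge X Y"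

definition root_count :: "nat list \<Rightarrow> int \<Rightarrow> nat" where
  "root_count B k = length (filter (\<lambda>z. z = k) (root_vec B))"

end

theory Submission
  imports Defs "HOL-Library.Multiset"
begin


definition validz :: "(nat \<Rightarrow> int) \<Rightarrow> nat \<Rightarrow> bool" where
 "validz z n \<longleftrightarrow> 1 \<le> n \<and> z 0 = 0 \<and> (\<forall>k. Suc k < n \<longrightarrow> z (Suc k) \<le> z k + 1) \<and> (\<forall>k<n. 0 \<le> z k)"
definition goodp :: "(nat \<Rightarrow> int) \<Rightarrow> nat \<Rightarrow> nat \<Rightarrow> nat \<Rightarrow> bool" where
 "goodp z n i j \<longleftrightarrow> 1 \<le> i \<and> i < j \<and> j < n \<and> z i < z j \<and> z j \<le> z (i-1) + 1 \<and> (Suc j < n \<longrightarrow> z (Suc j) \<le> z i + 1)"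
definition cnt :: "(nat \<Rightarrow> int) \<Rightarrow> nat \<Rightarrow> int \<Rightarrow> nat" where
 "cnt z n x = card {k. k < n \<and> z k = x}"
definition condz :: "(nat \<Rightarrow> int) \<Rightarrow> nat \<Rightarrow> bool" where
 "condz z n \<longleftrightarrow> (\<forall>x. 0 \<le> x \<and> (\<exists>k<n. x + 2 \<le> z k) \<and> 2 \<le> cnt z n x \<longrightarrow> 2 \<le> cnt z n (x+1))"
definition targz :: "(nat \<Rightarrow> int) \<Rightarrow> nat \<Rightarrow> bool" where
 "targz z n \<longleftrightarrow> (\<forall>k<n. (\<exists>k2<n. int k \<le> z k2) \<longrightarrow> z k = int k)"

lemma validz_le: "validz z n \<Longrightarrow> k < n \<Longrightarrow> z k \<le> int k"
proof (induction k)
  case 0 then show ?case by (simp add: validz_def)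
next
  case (Suc k)
  then have "z (Suc k) \<le> z k + 1" by (simp add: validz_def)
  with Suc show ?case by simp
qed

lemma cnt_two:
  assumes "a < n" "b < n" "a \<noteq> b" "z a = x" "z b = x"
  shows "2 \<le> cnt z n x"
proof -
  have "{a, b} \<subseteq> {k. k < n \<and> z k = x}" using assms by auto
  moreover have "finite {k. k < n \<and> z k = x}" by simp
  ultimately have "card {a,b} \<le> cnt z n x" unfolding cnt_def by (rule card_mono[rotated])
  with assms(3) show ?thesis by simp
qed

lemma key:
  assumes "validz z n" "condz z n" "\<not> targz z n"
  shows "\<exists>i j. goodp z n i j"
  using assms
proof (induction n arbitrary: z rule: less_induct)
  case (less n z)
  note V = less.prems(1) and C = less.prems(2) and T = less.prems(3)
  have n1: "1 \<le> n" and z0: "z 0 = 0" and st: "\<And>k. Suc k < n \<Longrightarrow> z (Suc k) \<le> z k + 1"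
    and nn: "\<And>k. k < n \<Longrightarrow> 0 \<le> z k" using V by (auto simp: validz_def)
  have le: "\<And>k. k < n \<Longrightarrow> z k \<le> int k" using V validz_le by blast
  from T obtain k k2 where k: "k < n" "k2 < n" "int k \<le> z k2" "z k \<noteq> int k"
    by (auto simp: targz_def)
  have n2: "2 \<le> n"
  proof (rule ccontr)
    assume "\<not> 2 \<le> n" then have "n = 1" using n1 by simp
    then show False using k z0 by simp
  qed
  define w where "w = z (n-1)"
  have wnn: "0 \<le> w" using nn n1 by (simp add: w_def)
  show ?case
  proof (cases "w = 0")
    case True
    have V': "validz z (n-1)" using V n2 by (auto simp: validz_def)
    have C': "condz z (n-1)"
      unfolding condz_def
    proof (intro allI impI)
      fix x assume a: "0 \<le> x \<and> (\<exists>k<n-1. x + 2 \<le> z k) \<and> 2 \<le> cnt z (n-1) x"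
      have "cnt z (n-1) x \<le> cnt z n x" unfolding cnt_def by (rule card_mono) auto
      moreover from a obtain k' where "k' < n-1" "x + 2 \<le> z k'" by blast
      then have "\<exists>k<n. x + 2 \<le> z k" by (intro exI[of _ k']) auto
      ultimately have "2 \<le> cnt z n (x+1)" using C a unfolding condz_def by (meson le_trans)
      moreover have "k < n \<and> z k = x+1 \<longleftrightarrow> k < n-1 \<and> z k = x+1" for k
        using True a w_def by (cases "k = n-1") auto
      then have "{k. k < n \<and> z k = x+1} = {k. k < n-1 \<and> z k = x+1}" by blast
      ultimately show "2 \<le> cnt z (n-1) (x+1)" by (simp add: cnt_def)
    qed
    have T': "\<not> targz z (n-1)"
    proof -
      have "k \<noteq> n-1"
      proof
        assume "k = n-1"
        then have "z k = 0" using True w_def by simp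
        with k have "1 \<le> k" by auto
        have "k2 \<noteq> n-1" using \<open>z k = 0\<close> k \<open>k = n-1\<close> by auto
        then have "k2 < k" using k \<open>k = n-1\<close> by auto
        then show False using le[of k2] k by auto
      qed
      moreover have "k2 \<noteq> n-1"
      proof
        assume "k2 = n-1"
        then have "k = 0" using k True w_def by simp
        then show False using k z0 by simp
      qed
      ultimately show ?thesis using k unfolding targz_def
        by (metis One_nat_def Suc_pred less_Suc_eq n1 not_less_zero zero_less_iff_neq_zero le_neq_implies_less)
    qed
    obtain i j where g: "goodp z (n-1) i j" using less.IH[of "n-1" z] V' C' T' n2 by auto
    have "goodp z n i j"
      using g nn True w_def unfolding goodp_def
      by (metis Suc_diff_1 add_increasing2 int_ops(2) less_Suc_eq linorder_not_less n1 order_less_le_trans zero_less_one  of_nat_0_le_iff)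
    then show ?thesis by blast
  next
    case False
    then have w1: "1 \<le> w" using wnn by simp
    show ?thesis
    proof (cases "\<exists>i. 1 \<le> i \<and> i \<le> n-2 \<and> w - 1 \<le> z (i-1) \<and> z i < w")
      case True
      then obtain i where i: "1 \<le> i" "i \<le> n-2" "w - 1 \<le> z (i-1)" "z i < w" by blast
      have "goodp z n i (n-1)" using i n2 unfolding goodp_def w_def by auto
      then show ?thesis by blast
    next
      case False
      then have P: "\<And>i. 1 \<le> i \<Longrightarrow> i \<le> n-2 \<Longrightarrow> w-1 \<le> z (i-1) \<Longrightarrow> w \<le> z i" by force
      have P1: "w \<le> z i" if "w-1 \<le> z k1" "k1 < i" "i \<le> n-2" for k1 i
        using that
      proof (induction i)
        case 0 then show ?case by simp
      next
        case (Suc i)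
        show ?case
        proof (cases "k1 = i")
          case True
          then show ?thesis using P[of "Suc i"] Suc.prems by simp
        next
          case False
          then have "w \<le> z i" using Suc by simp
          then show ?thesis using P[of "Suc i"] Suc.prems by simp
        qed
      qed
      have cw1: "cnt z n (w-1) \<le> 1"
        unfolding cnt_def One_nat_def
      proof (subst card_le_Suc0_iff_eq, simp, intro ballI)
        fix a b assume a: "a \<in> {k. k < n \<and> z k = w - 1}" and b: "b \<in> {k. k < n \<and> z k = w - 1}"
        have an: "a \<le> n-2" using a w_def by (cases "a = n-1") auto
        have bn: "b \<le> n-2" using b w_def by (cases "b = n-1") auto
        show "a = b"
        proof (rule ccontr)
          assume "a \<noteq> b"
          then consider "a < b" | "b < a" by linarith
          then show False
          proof cases
            case 1 then show ?thesis using P1[of a b] a b bn by simp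
          next
            case 2 then show ?thesis using P1[of b a] a b an by simp
          qed
        qed
      qed
      have cdown: "cnt z n (w-1-int d) \<le> 1" if "d \<le> nat (w-1)" for d
        using that
      proof (induction d)
        case 0 then show ?case using cw1 by simp
      next
        case (Suc d)
        show ?case
        proof (rule ccontr)
          assume "\<not> ?case"
          then have c2: "2 \<le> cnt z n (w - 1 - int (Suc d))" by simp
          have "(w - 1 - int (Suc d)) + 2 \<le> z (n-1)" using w_def by simp
          moreover have "n - 1 < n" using n1 by simp
          moreover have "0 \<le> w - 1 - int (Suc d)" using Suc.prems by simp
          ultimately have "2 \<le> cnt z n (w - 1 - int (Suc d) + 1)"
            using C c2 unfolding condz_def by blast
          moreover have e: "w - 1 - int (Suc d) + 1 = w - 1 - int d" by simp
          ultimately have "2 \<le> cnt z n (w - 1 - int d)" by metis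
          moreover have "cnt z n (w - 1 - int d) \<le> 1" using Suc.IH Suc.prems by simp
          ultimately show False by simp
        qed
      qed
      have cle: "cnt z n x \<le> 1" if "0 \<le> x" "x \<le> w-1" for x
        using cdown[of "nat (w-1-x)"] that by simp
      have wn: "w \<le> int (n-1)" using le[of "n-1"] n1 w_def by simp
      have wlt: "nat w < n" using wn n1 w1 by (simp add: nat_less_iff of_nat_diff)
      have idk: "z k = int k" if "k < nat w" for k
        using that
      proof (induction k rule: less_induct)
        case (less k)
        have kn: "k < n" using less.prems wn by linarith
        show ?case
        proof (rule ccontr)
          assume ne: "z k \<noteq> int k"
          then have lt: "z k < int k" using le[OF kn] by simp
          define x where "x = z k"
          have x0: "0 \<le> x" using nn kn x_def by simp
          have "nat x < k" using lt x0 x_def by simp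
          then have zx: "z (nat x) = x" using less.IH[of "nat x"] less.prems x0 by linarith
          have "2 \<le> cnt z n x"
            by (rule cnt_two[of "nat x" n k]) (use \<open>nat x < k\<close> kn zx x_def in auto)
          moreover have "cnt z n x \<le> 1" using cle[of x] x0 lt less.prems x_def by simp
          ultimately show False by simp
        qed
      qed
      have hi: "w \<le> z k" if "nat w \<le> k" "k < n" for k
      proof (cases "k = n-1")
        case True then show ?thesis using w_def by simp
      next
        case False
        have "z (nat w - 1) = w - 1" using idk[of "nat w - 1"] w1 by simp
        then show ?thesis using P1[of "nat w - 1" k] that False w1 by simp
      qed
      define z' where "z' = (\<lambda>k. z (k + nat w) - w)"
      define n' where "n' = n - nat w"
      have n'n: "n' < n" using w1 n1 n'_def by simp
      have zw: "z (nat w) = w"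
      proof -
        have "z (nat w) \<le> z (nat w - 1) + 1" using st[of "nat w - 1"] w1 wn by simp
        moreover have "z (nat w - 1) = w - 1" using idk[of "nat w - 1"] w1 by simp
        moreover have "w \<le> z (nat w)" using hi[of "nat w"] wlt by simp
        ultimately show ?thesis using w1 by simp
      qed
      have V': "validz z' n'"
        unfolding validz_def z'_def n'_def
        using wlt zw st hi by (auto simp: add.commute[of _ "nat w"])
      have cnt': "cnt z' n' x = cnt z n (x + w)" if "0 \<le> x" for x
      proof -
        have "{k. k < n \<and> z k = x + w} = (\<lambda>k. k + nat w) ` {k. k < n' \<and> z' k = x}"
        proof (rule set_eqI, rule iffI)
          fix k assume "k \<in> {k. k < n \<and> z k = x + w}"
          then have kk: "k < n" "z k = x + w" by auto
          have "nat w \<le> k"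
          proof (rule ccontr)
            assume "\<not> nat w \<le> k"
            then have "z k = int k" using idk by simp
            then show False using kk that \<open>\<not> nat w \<le> k\<close> by simp
          qed
          then show "k \<in> (\<lambda>k. k + nat w) ` {k. k < n' \<and> z' k = x}"
            using kk by (intro image_eqI[of _ _ "k - nat w"]) (auto simp: z'_def n'_def)
        next
          fix k assume "k \<in> (\<lambda>k. k + nat w) ` {k. k < n' \<and> z' k = x}"
          then show "k \<in> {k. k < n \<and> z k = x + w}" by (auto simp: z'_def n'_def)
        qed
        moreover have "inj_on (\<lambda>k. k + nat w) {k. k < n' \<and> z' k = x}" by (rule inj_onI) simp
        ultimately show ?thesis unfolding cnt_def by (simp add: card_image)
      qed
      have C': "condz z' n'"
        unfolding condz_def
      proof (intro allI impI)
        fix x assume a: "0 \<le> x \<and> (\<exists>k<n'. x + 2 \<le> z' k) \<and> 2 \<le> cnt z' n' x"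
        then obtain k where kk: "k < n'" "x + 2 \<le> z' k" by blast
        have "k + nat w < n" "x + w + 2 \<le> z (k + nat w)" using kk by (auto simp: z'_def n'_def)
        moreover have "2 \<le> cnt z n (x + w)" using a cnt'[of x] by simp
        moreover have "0 \<le> x + w" using a wnn by simp
        ultimately have "2 \<le> cnt z n (x + w + 1)" using C unfolding condz_def by blast
        moreover have "cnt z' n' (x+1) = cnt z n (x + 1 + w)" using cnt'[of "x+1"] a by simp
        ultimately show "2 \<le> cnt z' n' (x+1)" by (simp add: algebra_simps)
      qed
      have T': "\<not> targz z' n'"
      proof -
        have kw: "nat w \<le> k"
        proof (rule ccontr)
          assume "\<not> nat w \<le> k" then show False using idk k by simp
        qed
        have k2w: "nat w \<le> k2"
        proof (rule ccontr)
          assume "\<not> nat w \<le> k2" then have "z k2 = int k2" using idk by simp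
          then show False using k kw \<open>\<not> nat w \<le> k2\<close> by simp
        qed
        have "k - nat w < n'" "k2 - nat w < n'" using k kw k2w by (auto simp: n'_def)
        moreover have "int (k - nat w) \<le> z' (k2 - nat w)" using k kw k2w w1 by (simp add: z'_def)
        moreover have "z' (k - nat w) \<noteq> int (k - nat w)" using k kw w1 by (simp add: z'_def)
        ultimately show ?thesis unfolding targz_def by blast
      qed
      obtain i j where g: "goodp z' n' i j" using less.IH[OF n'n V' C' T'] by blast
      have "goodp z n (i + nat w) (j + nat w)"
        using g unfolding goodp_def z'_def n'_def
        by (auto simp: algebra_simps Suc_diff_le less_diff_conv)
      then show ?thesis by blast
    qed
  qed
qed



definition pl :: "nat list \<Rightarrow> nat \<Rightarrow> (nat \<times> nat) set set" where
  "pl B k = {S. S \<subseteq> cells B \<and> card S = k \<and> inj_on fst S \<and> inj_on snd S}"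

lemma rook_num_pl: "rook_num k B = card (pl B k)"
  by (simp add: rook_num_def pl_def)

lemma cells_sub: "cells B \<subseteq> {..<length B} \<times> {..sum_list B}"
  by (auto simp: cells_def intro: order_trans[OF _ elem_le_sum_list])

lemma finite_cells: "finite (cells B)"
  by (rule finite_subset[OF cells_sub]) simp

lemma finite_pl: "finite (pl B k)"
proof -
  have "pl B k \<subseteq> Pow (cells B)" by (auto simp: pl_def)
  then show ?thesis by (rule finite_subset) (simp add: finite_cells)
qed

lemma cells_snoc: "cells (B @ [c]) = cells B \<union> {(length B, r) | r. 1 \<le> r \<and> r \<le> c}"
  by (auto simp: cells_def nth_append less_Suc_eq)

lemma pl_zero: "pl B 0 = {{}}"
proof -
  have "S = {}" if "S \<in> pl B 0" for S
  proof -
    have "S \<subseteq> cells B" "card S = 0" using that by (auto simp: pl_def)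
    moreover then have "finite S" using finite_cells finite_subset by blast
    ultimately show ?thesis by simp
  qed
  then show ?thesis by (auto simp: pl_def)
qed

lemma pl_Nil: "pl [] k = (if k = 0 then {{}} else {})"
  by (auto simp: pl_def cells_def)

lemma rook_Nil: "rook_num k [] = (if k = 0 then 1 else 0)"
  by (simp add: rook_num_pl pl_Nil)

lemma rook_snoc_nat:
  assumes srt: "sorted (B @ [c])" and k1: "1 \<le> k"
  shows "rook_num k (B @ [c]) = rook_num k B + card (pl B (k-1)) * (c - (k-1))"
proof -
  let ?n = "length B"
  define A where "A = {S \<in> pl (B @ [c]) k. \<forall>r. (?n, r) \<notin> S}"
  define Q where "Q = {S \<in> pl (B @ [c]) k. \<exists>r. (?n, r) \<in> S}"
  define Sg where "Sg = Sigma (pl B (k-1)) (\<lambda>T. {1..c} - snd ` T)"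
  have cB: "\<And>i r. (i, r) \<in> cells B \<Longrightarrow> i < ?n" by (auto simp: cells_def)
  have cBc: "\<And>i r. (i, r) \<in> cells B \<Longrightarrow> r \<le> c"
  proof -
    fix i r assume "(i, r) \<in> cells B"
    then have "i < ?n" "r \<le> B ! i" by (auto simp: cells_def)
    moreover have "\<forall>x\<in>set B. x \<le> c" using srt by (simp add: sorted_append)
    ultimately show "r \<le> c" by (meson nth_mem order_trans)
  qed
  have AB: "A = pl B k"
  proof
    show "A \<subseteq> pl B k"
    proof
      fix S assume "S \<in> A"
      then have "S \<subseteq> cells (B @ [c])" "\<forall>r. (?n, r) \<notin> S" and p: "card S = k \<and> inj_on fst S \<and> inj_on snd S"
        by (auto simp: A_def pl_def)
      then have "S \<subseteq> cells B" unfolding cells_snoc by auto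
      with p show "S \<in> pl B k" by (simp add: pl_def)
    qed
  next
    show "pl B k \<subseteq> A"
      using cB by (fastforce simp: A_def pl_def cells_snoc)
  qed
  have split: "pl (B @ [c]) k = A \<union> Q" "A \<inter> Q = {}" by (auto simp: A_def Q_def)
  have fin: "finite A" "finite Q" using finite_pl[of "B @ [c]" k] by (auto simp: A_def Q_def)
  have finS: "finite Sg" unfolding Sg_def using finite_pl by auto
  define f where "f = (\<lambda>(T :: (nat \<times> nat) set, r :: nat). insert (?n, r) T)"
  have QS: "Q = f ` Sg"
  proof
    show "f ` Sg \<subseteq> Q"
    proof
      fix S assume "S \<in> f ` Sg"
      then obtain T r where T: "T \<in> pl B (k-1)" "1 \<le> r" "r \<le> c" "r \<notin> snd ` T" and S: "S = insert (?n, r) T"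
        by (auto simp: Sg_def f_def)
      have Tc: "T \<subseteq> cells B" "card T = k - 1" "inj_on fst T" "inj_on snd T" using T by (auto simp: pl_def)
      have finT: "finite T" using Tc finite_cells finite_subset by blast
      have nT: "(?n, r) \<notin> T" using Tc cB by auto
      have nfst: "?n \<notin> fst ` T" using Tc cB by force
      have "S \<subseteq> cells (B @ [c])" using Tc T S by (auto simp: cells_snoc)
      moreover have "card S = k" using S finT nT Tc k1 by simp
      moreover have "inj_on fst S" using S Tc nfst nT by (simp add: inj_on_insert)
      moreover have "inj_on snd S" using S Tc T nT by (simp add: inj_on_insert)
      ultimately show "S \<in> Q" using S by (auto simp: Q_def pl_def)
    qed
  next
    show "Q \<subseteq> f ` Sg"
    proof
      fix S assume "S \<in> Q"
      then obtain r where r: "(?n, r) \<in> S" and Sp: "S \<subseteq> cells (B @ [c])" "card S = k" "inj_on fst S" "inj_on snd S"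
        by (auto simp: Q_def pl_def)
      define T where "T = S - {(?n, r)}"
      have finS: "finite S" using Sp finite_cells finite_subset by blast
      have "r \<ge> 1" "r \<le> c" using r Sp cB unfolding cells_snoc by auto
      have Tsub: "T \<subseteq> cells B"
      proof
        fix x assume x: "x \<in> T"
        obtain i s where xi: "x = (i, s)" by fastforce
        have "x \<in> S" "x \<noteq> (?n, r)" using x by (auto simp: T_def)
        then have "i \<noteq> ?n" using Sp(3) r xi by (metis fst_conv inj_onD)
        then show "x \<in> cells B" using \<open>x \<in> S\<close> Sp(1) xi unfolding cells_snoc by auto
      qed
      have "card T = k - 1" using Sp r finS by (simp add: T_def)
      moreover have "inj_on fst T" "inj_on snd T" using Sp by (auto simp: T_def intro: inj_on_subset)
      moreover have "r \<notin> snd ` T"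
      proof
        assume "r \<in> snd ` T"
        then obtain x where "x \<in> T" "snd x = r" by auto
        then show False using Sp(4) r by (metis Diff_iff T_def inj_onD singletonI snd_conv)
      qed
      ultimately have "(T, r) \<in> Sg" using Tsub \<open>r \<ge> 1\<close> \<open>r \<le> c\<close> by (auto simp: Sg_def pl_def)
      moreover have "S = f (T, r)" using r by (auto simp: f_def T_def)
      ultimately show "S \<in> f ` Sg" by blast
    qed
  qed
  have injf: "inj_on f Sg"
  proof (rule inj_onI)
    fix x y assume x: "x \<in> Sg" and y: "y \<in> Sg" and e: "f x = f y"
    obtain T r where xT: "x = (T, r)" by fastforce
    obtain T' r' where yT: "y = (T', r')" by fastforce
    have "T \<subseteq> cells B" "T' \<subseteq> cells B" using x y xT yT by (auto simp: Sg_def pl_def)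
    then have nT: "\<And>s. (?n, s) \<notin> T" "\<And>s. (?n, s) \<notin> T'" using cB by auto
    have e': "insert (?n, r) T = insert (?n, r') T'" using e xT yT by (simp add: f_def)
    then have "(?n, r) \<in> insert (?n, r') T'" by blast
    then have "r = r'" using nT by auto
    moreover have "T = T'"
    proof -
      have "T = insert (?n, r) T - {(?n, r)}" using nT by auto
      also have "\<dots> = insert (?n, r') T' - {(?n, r')}" using e' \<open>r = r'\<close> by simp
      also have "\<dots> = T'" using nT by auto
      finally show ?thesis .
    qed
    ultimately show "x = y" using xT yT by simp
  qed
  have cardQ: "card Q = card Sg" using QS injf by (simp add: card_image)
  have cardSg: "card Sg = card (pl B (k-1)) * (c - (k-1))"
  proof -
    have "card Sg = (\<Sum>T\<in>pl B (k-1). card ({1..c} - snd ` T))"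
      unfolding Sg_def using finite_pl by (simp add: card_SigmaI)
    also have "\<dots> = (\<Sum>T\<in>pl B (k-1). c - (k-1))"
    proof (rule sum.cong[OF refl])
      fix T assume T: "T \<in> pl B (k-1)"
      have Tc: "T \<subseteq> cells B" "card T = k - 1" "inj_on snd T" using T by (auto simp: pl_def)
      have finT: "finite T" using Tc finite_cells finite_subset by blast
      have sub: "snd ` T \<subseteq> {1..c}" using Tc cBc by (force simp: cells_def)
      have "card (snd ` T) = k - 1" using Tc by (simp add: card_image)
      then show "card ({1..c} - snd ` T) = c - (k-1)"
        using sub finT by (simp add: card_Diff_subset)
    qed
    also have "\<dots> = card (pl B (k-1)) * (c - (k-1))" by simp
    finally show ?thesis .
  qed
  have "rook_num k (B @ [c]) = card A + card Q"
    unfolding rook_num_pl split(1) using fin split(2) by (simp add: card_Un_disjoint)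
  then show ?thesis using AB cardQ cardSg by (simp add: rook_num_pl)
qed

lemma pl_bound:
  assumes srt: "sorted (B @ [c])" and "pl B m \<noteq> {}"
  shows "m \<le> c"
proof -
  obtain T where T: "T \<in> pl B m" using assms by blast
  have Tc: "T \<subseteq> cells B" "card T = m" "inj_on snd T" using T by (auto simp: pl_def)
  have "\<forall>x\<in>set B. x \<le> c" using srt by (simp add: sorted_append)
  then have sub: "snd ` T \<subseteq> {1..c}" using Tc by (force simp: cells_def dest: nth_mem)
  have "m = card (snd ` T)" using Tc by (simp add: card_image)
  also have "\<dots> \<le> card {1..c}" using sub by (intro card_mono) auto
  finally show ?thesis by simp
qed

definition stepZ :: "nat \<Rightarrow> int \<Rightarrow> (nat \<Rightarrow> int) \<Rightarrow> nat \<Rightarrow> int" where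
  "stepZ m z r k = r k + (if k = 0 then 0 else (int m - z - int k + 1) * r (k - 1))"

fun goZ :: "nat \<Rightarrow> int list \<Rightarrow> (nat \<Rightarrow> int) \<Rightarrow> nat \<Rightarrow> int" where
  "goZ m [] r = r"
| "goZ m (z # zs) r = goZ (Suc m) zs (stepZ m z r)"

definition r0 :: "nat \<Rightarrow> int" where "r0 k = (if k = 0 then 1 else 0)"

lemma goZ_append: "goZ m (xs @ ys) r = goZ (m + length xs) ys (goZ m xs r)"
  by (induction xs arbitrary: m r) auto

lemma goZ_snoc: "goZ m (xs @ [z]) r = stepZ (m + length xs) z (goZ m xs r)"
  by (simp add: goZ_append)

lemma root_vec_snoc: "root_vec (B @ [c]) = root_vec B @ [int (length B) - int c]"
  by (simp add: root_vec_def nth_append)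

lemma rook_go:
  assumes "ferrers B"
  shows "int (rook_num k B) = goZ 0 (root_vec B) r0 k"
  using assms
proof (induction B arbitrary: k rule: rev_induct)
  case Nil
  then show ?case by (simp add: rook_Nil root_vec_def r0_def)
next
  case (snoc c B)
  have srt: "sorted (B @ [c])" using snoc.prems by (simp add: ferrers_def)
  have fB: "ferrers B" using srt by (simp add: ferrers_def sorted_append)
  have lr: "length (root_vec B) = length B" by (simp add: root_vec_def)
  show ?case
  proof (cases "k = 0")
    case True
    have "rook_num 0 (B @ [c]) = rook_num 0 B"
      by (simp add: rook_num_pl pl_zero)
    then show ?thesis using True snoc.IH[OF fB, of 0]
      by (simp add: root_vec_snoc goZ_snoc stepZ_def)
  next
    case False
    have rs: "rook_num k (B @ [c]) = rook_num k B + rook_num (k-1) B * (c - (k-1))"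
      using rook_snoc_nat[OF srt] False by (simp add: rook_num_pl)
    have "int (rook_num (k-1) B * (c - (k-1))) = int (rook_num (k-1) B) * (int c - int k + 1)"
    proof (cases "pl B (k-1) = {}")
      case True then show ?thesis by (simp add: rook_num_pl)
    next
      case F: False
      then have "k - 1 \<le> c" using pl_bound[OF srt] by blast
      then show ?thesis using False by (simp add: of_nat_diff)
    qed
    then show ?thesis using rs snoc.IH[OF fB, of k] snoc.IH[OF fB, of "k-1"] False lr
      by (simp add: root_vec_snoc goZ_snoc stepZ_def algebra_simps)
  qed
qed

lemma stepZ_comm: "stepZ (Suc m) b (stepZ m a r) = stepZ (Suc m) a (stepZ m b r)"
proof
  fix k
  show "stepZ (Suc m) b (stepZ m a r) k = stepZ (Suc m) a (stepZ m b r) k"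
  proof (cases k)
    case 0 then show ?thesis by (simp add: stepZ_def)
  next
    case (Suc k')
    then show ?thesis
      by (cases k') (simp_all add: stepZ_def algebra_simps)
  qed
qed

lemma goZ_adj: "goZ m (a # b # zs) r = goZ m (b # a # zs) r"
  by (simp add: stepZ_comm)

lemma goZ_move: "goZ m (a # ys @ rest) r = goZ m (ys @ a # rest) r"
proof (induction ys arbitrary: m r)
  case Nil then show ?case by simp
next
  case (Cons y ys)
  have "goZ m (a # (y # ys) @ rest) r = goZ m (y # a # ys @ rest) r"
    using goZ_adj by simp
  also have "\<dots> = goZ (Suc m) (a # ys @ rest) (stepZ m y r)" by simp
  also have "\<dots> = goZ (Suc m) (ys @ a # rest) (stepZ m y r)" using Cons by simp
  finally show ?case by simp
qed

lemma goZ_transp: "goZ m (xs @ a # ys @ b # zs) r = goZ m (xs @ b # ys @ a # zs) r"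
proof -
  have "goZ m (a # ys @ b # zs) r' = goZ m (b # ys @ a # zs) r'" for m r'
  proof -
    have "goZ m (a # ys @ b # zs) r' = goZ m (ys @ a # b # zs) r'" by (rule goZ_move)
    also have "\<dots> = goZ (m + length ys) (a # b # zs) (goZ m ys r')" by (simp add: goZ_append)
    also have "\<dots> = goZ (m + length ys) (b # a # zs) (goZ m ys r')" by (rule goZ_adj)
    also have "\<dots> = goZ m (ys @ b # a # zs) r'" by (simp add: goZ_append)
    also have "\<dots> = goZ m (b # ys @ a # zs) r'" by (rule goZ_move[symmetric])
    finally show ?thesis .
  qed
  then show ?thesis by (simp add: goZ_append)
qed

lemma upd2:
  assumes "length xs = i" "length ys = j - i - 1" "i < j"
  shows "(xs @ a # ys @ b # zs)[i := x, j := y] = xs @ x # ys @ y # zs"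
proof -
  have j: "j = length xs + Suc (length ys)" using assms by simp
  show ?thesis using assms(1) unfolding j by (simp add: list_update_append)
qed

lemma list_transp:
  assumes "i < j" "j < length L"
  shows "L = take i L @ L ! i # take (j - i - 1) (drop (Suc i) L) @ L ! j # drop (Suc j) L"
proof -
  have d1: "drop j L = L ! j # drop (Suc j) L" using assms by (simp add: Cons_nth_drop_Suc)
  have "drop (j - i - 1) (drop (Suc i) L) = drop j L" using assms by simp
  then have d: "drop (Suc i) L = take (j-i-1) (drop (Suc i) L) @ L ! j # drop (Suc j) L"
    using d1 by (metis append_take_drop_id)
  have "L = take i L @ L ! i # drop (Suc i) L" using assms by (simp add: id_take_nth_drop)
  then show ?thesis using d by metis
qed

lemma goZ_swap:
  assumes "i < j" "j < length L"
  shows "goZ m (L[i := L ! j, j := L ! i]) r = goZ m L r"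
proof -
  let ?xs = "take i L" and ?ys = "take (j - i - 1) (drop (Suc i) L)" and ?zs = "drop (Suc j) L"
  have L: "L = ?xs @ L ! i # ?ys @ L ! j # ?zs" by (rule list_transp[OF assms])
  have lx: "length ?xs = i" "length ?ys = j - i - 1" using assms by auto
  have "L[i := L ! j, j := L ! i] = ?xs @ L ! j # ?ys @ L ! i # ?zs"
    by (subst L, subst L, subst L, rule upd2[OF lx assms(1)])
  then show ?thesis using goZ_transp L by metis
qed



lemma len_rv[simp]: "length (root_vec X) = length X"
  by (simp add: root_vec_def)

lemma rv_nth: "k < length X \<Longrightarrow> root_vec X ! k = int k - int (X ! k)"
  by (simp add: root_vec_def)

lemma valid_of:
  assumes "ferrers X" "X \<noteq> []" "\<forall>z\<in>set (root_vec X). 0 \<le> z"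
  shows "validz (\<lambda>k. root_vec X ! k) (length X)"
proof -
  have nn: "\<And>k. k < length X \<Longrightarrow> 0 \<le> root_vec X ! k"
    using assms(3) by (metis len_rv nth_mem)
  have "0 \<le> root_vec X ! 0" using nn assms(2) by simp
  then have z0: "root_vec X ! 0 = 0" using assms(2) by (simp add: rv_nth)
  have "\<And>k. Suc k < length X \<Longrightarrow> X ! k \<le> X ! Suc k"
    using assms(1) by (simp add: ferrers_def sorted_iff_nth_Suc)
  then have "\<And>k. Suc k < length X \<Longrightarrow> root_vec X ! Suc k \<le> root_vec X ! k + 1"
    by (simp add: rv_nth)
  then show ?thesis using z0 nn assms(2) unfolding validz_def by (simp add: Suc_le_eq)
qed

lemma validz_swap:
  assumes V: "validz z n" and G: "goodp z n i j"
  shows "validz (\<lambda>k. if k = i then z j else if k = j then z i else z k) n"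
proof -
  have st: "\<And>k. Suc k < n \<Longrightarrow> z (Suc k) \<le> z k + 1" and z0: "z 0 = 0" and nn: "\<And>k. k < n \<Longrightarrow> 0 \<le> z k"
    and n1: "1 \<le> n" using V by (auto simp: validz_def)
  have g: "1 \<le> i" "i < j" "j < n" "z i < z j" "z j \<le> z (i-1) + 1" "Suc j < n \<Longrightarrow> z (Suc j) \<le> z i + 1"
    using G by (auto simp: goodp_def)
  have sj: "z j \<le> z (j-1) + 1" using st[of "j-1"] g by simp
  have si: "Suc i < n \<Longrightarrow> z (Suc i) \<le> z i + 1" using st by simp
  show ?thesis
    unfolding validz_def
  proof (intro conjI allI impI)
    show "1 \<le> n" by (rule n1)
    show "(if 0 = i then z j else if 0 = j then z i else z 0) = 0" using g z0 by simp
  next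
    fix k assume k: "k < n"
    show "0 \<le> (if k = i then z j else if k = j then z i else z k)" using nn k g by auto
  next
    fix k assume k: "Suc k < n"
    show "(if Suc k = i then z j else if Suc k = j then z i else z (Suc k))
          \<le> (if k = i then z j else if k = j then z i else z k) + 1"
    proof -
      consider "Suc k = i" | "k = i" | "Suc k = j" "k \<noteq> i" | "k = j" | "Suc k \<noteq> i" "k \<noteq> i" "Suc k \<noteq> j" "k \<noteq> j"
        by blast
      then show ?thesis
      proof cases
        case 1 then have "k = i - 1" "k \<noteq> j" using g by auto
        then show ?thesis using 1 g by auto
      next
        case 2 then show ?thesis using g si k by auto
      next
        case 3 then have "k = j - 1" by simp
        then show ?thesis using 3 g sj by auto
      next
        case 4 then show ?thesis using g k by auto
      next
        case 5 then show ?thesis using st[OF k] by simp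
      qed
    qed
  qed
qed

definition phi :: "nat list \<Rightarrow> int" where
  "phi X = (\<Sum>k<length X. int k * root_vec X ! k)"

lemma sum_swap:
  fixes L :: "int list"
  assumes "i < j" "j < length L"
  shows "(\<Sum>k<length L. int k * L[i := L ! j, j := L ! i] ! k)
       = (\<Sum>k<length L. int k * L ! k) + (int i - int j) * (L ! j - L ! i)"
proof -
  let ?n = "length L"
  have "(\<Sum>k<?n. int k * L[i := L ! j, j := L ! i] ! k)
      = (\<Sum>k<?n. int k * L ! k + ((if k = i then int i * (L ! j - L ! i) else 0)
                              + (if k = j then int j * (L ! i - L ! j) else 0)))"
    using assms by (intro sum.cong refl) (auto simp: nth_list_update algebra_simps)
  also have "\<dots> = (\<Sum>k<?n. int k * L ! k) + (int i * (L ! j - L ! i) + int j * (L ! i - L ! j))"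
    using assms by (simp add: sum.distrib)
  finally show ?thesis by (simp add: algebra_simps)
qed

lemma rc_eq:
  assumes "mset (root_vec X) = mset (root_vec B)"
  shows "root_count X x = root_count B x"
proof -
  have "root_count X x = size (filter_mset (\<lambda>z. z = x) (mset (root_vec X)))"
    unfolding root_count_def by (metis mset_filter size_mset)
  also have "\<dots> = size (filter_mset (\<lambda>z. z = x) (mset (root_vec B)))" using assms by simp
  also have "\<dots> = root_count B x" unfolding root_count_def by (metis mset_filter size_mset)
  finally show ?thesis .
qed

lemma cnt_rc: "cnt (\<lambda>k. root_vec X ! k) (length X) x = root_count X x"
  by (simp add: cnt_def root_count_def length_filter_conv_card)

lemma rook_equiv_of:
  assumes "ferrers X" "ferrers Y" "goZ 0 (root_vec X) r0 = goZ 0 (root_vec Y) r0"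
  shows "rook_equiv X Y"
  unfolding rook_equiv_def
proof
  fix k
  have "int (rook_num k X) = int (rook_num k Y)"
    using rook_go[OF assms(1)] rook_go[OF assms(2)] assms(3) by simp
  then show "rook_num k X = rook_num k Y" by simp
qed



lemma swap_step:
  assumes fX: "ferrers X" and V: "validz (\<lambda>k. root_vec X ! k) (length X)"
    and G: "goodp (\<lambda>k. root_vec X ! k) (length X) i j"
  obtains Y where "length Y = length X" "ferrers Y" "board_edge X Y"
    "root_vec Y = (root_vec X)[i := root_vec X ! j, j := root_vec X ! i]"
    "phi Y < phi X"
proof -
  let ?z = "\<lambda>k. root_vec X ! k"
  let ?n = "length X"
  have g: "1 \<le> i" "i < j" "j < ?n" "?z i < ?z j" "?z j \<le> ?z (i-1) + 1"
    using G by (auto simp: goodp_def)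
  have zle: "?z (i-1) \<le> int (i-1)" using validz_le[OF V, of "i-1"] g by simp
  define d where "d = nat (?z j - ?z i)"
  have d0: "0 < d" using g by (simp add: d_def)
  have zi: "?z i = int i - int (X ! i)" "?z j = int j - int (X ! j)" using g by (auto simp: rv_nth)
  have dle: "d \<le> X ! i" using g zle zi by (simp add: d_def)
  define Y where "Y = X[i := X ! i - d, j := X ! j + d]"
  have lY: "length Y = ?n" by (simp add: Y_def)
  have Yi: "Y ! i = X ! i - d" using g by (simp add: Y_def nth_list_update)
  have Yj: "Y ! j = X ! j + d" using g by (simp add: Y_def nth_list_update)
  have Yk: "\<And>k. k \<noteq> i \<Longrightarrow> k \<noteq> j \<Longrightarrow> Y ! k = X ! k" by (simp add: Y_def)
  have rvY: "root_vec Y = (root_vec X)[i := root_vec X ! j, j := root_vec X ! i]"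
  proof (rule nth_equalityI)
    show "length (root_vec Y) = length ((root_vec X)[i := root_vec X ! j, j := root_vec X ! i])"
      by (simp add: lY)
  next
    fix k assume k: "k < length (root_vec Y)"
    then have kn: "k < ?n" by (simp add: lY)
    show "root_vec Y ! k = (root_vec X)[i := root_vec X ! j, j := root_vec X ! i] ! k"
    proof (cases "k = i")
      case True
      then show ?thesis using kn g dle Yi zi by (simp add: rv_nth lY nth_list_update d_def of_nat_diff)
    next
      case False
      show ?thesis
      proof (cases "k = j")
        case True
        then show ?thesis using kn g Yj zi False by (simp add: rv_nth lY nth_list_update d_def)
      next
        case F2: False
        then show ?thesis using kn False Yk by (simp add: rv_nth lY nth_list_update)
      qed
    qed
  qed
  let ?z' = "\<lambda>k. if k = i then ?z j else if k = j then ?z i else ?z k"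
  have V': "validz ?z' ?n" by (rule validz_swap[OF V G])
  have zY: "\<And>k. k < ?n \<Longrightarrow> root_vec Y ! k = ?z' k"
    using g by (simp add: rvY nth_list_update)
  have fY: "ferrers Y"
    unfolding ferrers_def sorted_iff_nth_Suc
  proof (intro allI impI)
    fix k assume k: "Suc k < length Y"
    have "?z' (Suc k) \<le> ?z' k + 1" using V' k lY by (simp add: validz_def)
    then have "root_vec Y ! Suc k \<le> root_vec Y ! k + 1" using zY k lY by simp
    then show "Y ! k \<le> Y ! Suc k" using k by (simp add: rv_nth)
  qed
  have be: "board_edge X Y"
    unfolding board_edge_def Let_def
  proof (rule exI[of _ 0], rule exI[of _ 0], simp add: lY, intro exI conjI)
    show "i < ?n" "j < ?n" "i \<noteq> j" "0 < d" using g d0 by auto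
    show "X ! i = Y ! i + d" using Yi dle by simp
    show "X ! j + d = Y ! j" using Yj by simp
    show "\<forall>l<?n. l \<noteq> i \<and> l \<noteq> j \<longrightarrow> X ! l = Y ! l" using Yk by simp
  qed
  have "phi Y = phi X + (int i - int j) * (?z j - ?z i)"
    unfolding phi_def lY using sum_swap[of i j "root_vec X"] g rvY by simp
  moreover have "(int i - int j) * (?z j - ?z i) < 0" using g by (simp add: mult_neg_pos)
  ultimately have "phi Y < phi X" by simp
  then show ?thesis using that lY fY be rvY by blast
qed

lemma phi_nn: "\<forall>z\<in>set (root_vec X). 0 \<le> z \<Longrightarrow> 0 \<le> phi X"
  unfolding phi_def by (intro sum_nonneg) (metis len_rv lessThan_iff mult_nonneg_nonneg nth_mem of_nat_0_le_iff)

lemma main_loop: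
  assumes fB: "ferrers B" and ne: "B \<noteq> []" and nnB: "\<forall>z \<in> set (root_vec B). 0 \<le> z"
    and cB: "\<forall>i::int. 0 \<le> i \<and> i < Max (set (root_vec B)) - 1 \<and> root_count B i > 1
           \<longrightarrow> root_count B (i + 1) > 1"
  shows "\<forall>X. ferrers X \<and> length X = length B \<and> (G_edge B)\<^sup>*\<^sup>* B X
        \<and> mset (root_vec X) = mset (root_vec B) \<and> goZ 0 (root_vec X) r0 = goZ 0 (root_vec B) r0
        \<and> nat (phi X) = N \<longrightarrow>
        (\<exists>Y. (G_edge B)\<^sup>*\<^sup>* B Y \<and> length Y = length B \<and> mset (root_vec Y) = mset (root_vec B)
             \<and> targz (\<lambda>k. root_vec Y ! k) (length B))"
proof (induction N rule: less_induct)
  case (less N)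
  show ?case
  proof (intro allI impI)
    fix X
    assume a: "ferrers X \<and> length X = length B \<and> (G_edge B)\<^sup>*\<^sup>* B X
        \<and> mset (root_vec X) = mset (root_vec B) \<and> goZ 0 (root_vec X) r0 = goZ 0 (root_vec B) r0
        \<and> nat (phi X) = N"
    then have fX: "ferrers X" and lX: "length X = length B" and pX: "(G_edge B)\<^sup>*\<^sup>* B X"
      and mX: "mset (root_vec X) = mset (root_vec B)" and gX: "goZ 0 (root_vec X) r0 = goZ 0 (root_vec B) r0"
      and NX: "nat (phi X) = N" by auto
    have sX: "set (root_vec X) = set (root_vec B)" by (metis mX set_mset_mset)
    have nnX: "\<forall>z \<in> set (root_vec X). 0 \<le> z" using sX nnB by simp
    have neX: "X \<noteq> []" using lX ne by auto
    have V: "validz (\<lambda>k. root_vec X ! k) (length X)" by (rule valid_of[OF fX neX nnX])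
    show "\<exists>Y. (G_edge B)\<^sup>*\<^sup>* B Y \<and> length Y = length B \<and> mset (root_vec Y) = mset (root_vec B)
             \<and> targz (\<lambda>k. root_vec Y ! k) (length B)"
    proof (cases "targz (\<lambda>k. root_vec X ! k) (length B)")
      case True
      then show ?thesis using pX lX mX by blast
    next
      case False
      have C: "condz (\<lambda>k. root_vec X ! k) (length X)"
        unfolding condz_def
      proof (intro allI impI)
        fix x assume h: "0 \<le> x \<and> (\<exists>k<length X. x + 2 \<le> root_vec X ! k)
                        \<and> 2 \<le> cnt (\<lambda>k. root_vec X ! k) (length X) x"
        then obtain k where k: "k < length X" "x + 2 \<le> root_vec X ! k" by blast
        have "root_vec X ! k \<in> set (root_vec B)" using k sX by (metis len_rv nth_mem)
        then have "root_vec X ! k \<le> Max (set (root_vec B))" by simp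
        then have "x < Max (set (root_vec B)) - 1" using k by simp
        moreover have "root_count B x > 1" using h cnt_rc[of X x] rc_eq[OF mX, of x] by simp
        ultimately have "root_count B (x+1) > 1" using cB h by blast
        then show "2 \<le> cnt (\<lambda>k. root_vec X ! k) (length X) (x + 1)"
          using cnt_rc[of X "x+1"] rc_eq[OF mX, of "x+1"] by simp
      qed
      obtain i j where G: "goodp (\<lambda>k. root_vec X ! k) (length X) i j"
        using key[OF V C] False lX by auto
      obtain Y where Y: "length Y = length X" "ferrers Y" "board_edge X Y"
        "root_vec Y = (root_vec X)[i := root_vec X ! j, j := root_vec X ! i]" "phi Y < phi X"
        by (rule swap_step[OF fX V G])
      have ij: "i < j" "j < length (root_vec X)" using G by (auto simp: goodp_def)
      have gY: "goZ 0 (root_vec Y) r0 = goZ 0 (root_vec B) r0"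
        using goZ_swap[OF ij] Y(4) gX by simp
      have mY: "mset (root_vec Y) = mset (root_vec B)"
        using Y(4) mset_swap[of j "root_vec X" i] ij mX by (simp add: list_update_swap)
      have reX: "rook_equiv X B" by (rule rook_equiv_of[OF fX fB gX])
      have reY: "rook_equiv Y B" by (rule rook_equiv_of[OF Y(2) fB gY])
      have "G_edge B X Y" using fX Y(2,3) reX reY by (simp add: G_edge_def)
      then have pY: "(G_edge B)\<^sup>*\<^sup>* B Y" using pX by (rule rtranclp.rtrancl_into_rtrancl[rotated])
      have nnY: "\<forall>z \<in> set (root_vec Y). 0 \<le> z" using mY nnB by (metis set_mset_mset)
      have lt: "nat (phi Y) < N" using Y(5) phi_nn[OF nnY] NX by simp
      show ?thesis
        apply (rule less.IH[OF lt, rule_format, of Y])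
        using Y(1,2) lX pY mY gY by simp
    qed
  qed
qed

theorem lemma9:
  fixes B :: "nat list"
  assumes "ferrers B"
    and "B \<noteq> []"
    and "\<forall>z \<in> set (root_vec B). 0 \<le> z"
    and "\<forall>i::int. 0 \<le> i \<and> i < Max (set (root_vec B)) - 1 \<and> root_count B i > 1
           \<longrightarrow> root_count B (i + 1) > 1"
  shows "\<exists>B'. (G_edge B)\<^sup>*\<^sup>* B B' \<and> length B' = length B \<and>
           take (nat (Max (set (root_vec B))) + 1) (root_vec B')
             = map int [0..<nat (Max (set (root_vec B))) + 1]"
proof -
  obtain Y where pY: "(G_edge B)\<^sup>*\<^sup>* B Y" and lY: "length Y = length B"
    and mY: "mset (root_vec Y) = mset (root_vec B)" and tY: "targz (\<lambda>k. root_vec Y ! k) (length B)"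
    using main_loop[OF assms, of "nat (phi B)"] assms(1) by blast
  let ?M = "Max (set (root_vec B))"
  have sY: "set (root_vec Y) = set (root_vec B)" by (metis mY set_mset_mset)
  have "set (root_vec B) \<noteq> {}" using assms(2) by (simp add: root_vec_def)
  then have "?M \<in> set (root_vec B)" by simp
  then have "?M \<in> set (root_vec Y)" using sY by simp
  then obtain k2 where k2: "k2 < length Y" "root_vec Y ! k2 = ?M" by (metis in_set_conv_nth len_rv)
  have M0: "0 \<le> ?M" using \<open>?M \<in> set (root_vec B)\<close> assms(3) by blast
  have Mk2: "?M \<le> int k2" using k2 by (simp add: rv_nth)
  have bound: "nat ?M + 1 \<le> length Y" using Mk2 k2 M0 by linarith
  show ?thesis
  proof (intro exI conjI)
    show "(G_edge B)\<^sup>*\<^sup>* B Y" by (rule pY)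
    show "length Y = length B" by (rule lY)
    show "take (nat ?M + 1) (root_vec Y) = map int [0..<nat ?M + 1]"
    proof (rule nth_equalityI)
      show "length (take (nat ?M + 1) (root_vec Y)) = length (map int [0..<nat ?M + 1])"
        using bound by simp
    next
      fix k assume "k < length (take (nat ?M + 1) (root_vec Y))"
      then have k: "k < nat ?M + 1" "k < length Y" by auto
      have "int k \<le> root_vec Y ! k2" using k k2 M0 by simp
      then have "\<exists>k2<length B. int k \<le> root_vec Y ! k2" using k2 lY by auto
      then have "root_vec Y ! k = int k" using tY k lY unfolding targz_def by auto
      moreover have "map int [0..<nat ?M + 1] ! k = int k" using k(1) by (simp del: upt_Suc)
      ultimately show "take (nat ?M + 1) (root_vec Y) ! k = map int [0..<nat ?M + 1] ! k"
        using k by simp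
    qed
  qed
qed

end
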